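(* Let $L$ be a finite extension of the semifield $\mathbb{B}$. Then $L=\mathbb{B}$ (the embedding $\mathbb{B}\to L$ is surjective).
   Context: $\mathbb{B}=\{0,1\}$ is the semifield with $x+0=0+x=x$, $1+1=1$, and the obvious multiplication. A semifield is a commutative semiring in which every nonzero element is a unit. An extension of a semifield $K$ is a semifield $L$ with an injective homomorphism $K\to L$; it is finite if $L$ is a finitely generated $K$-semimodule. *)

theory Defs
  imports Main
begin

text \<open>The Boolean semifield B = {0,1} is modelled on the type bool:
  0 = False, 1 = True, addition = disjunction (so 1+1 = 1),
  multiplication = conjunction.\<close>

text \<open>A semifield: a commutative semiring (with 0 \<noteq> 1, built into
  comm_semiring_1) in which every nonzero element is a unit.\<close>
definition is_semifield :: "'a::comm_semiring_1 itself \<Rightarrow> bool" where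
  "is_semifield _ \<longleftrightarrow> (\<forall>x::'a. x \<noteq> 0 \<longrightarrow> (\<exists>y. x * y = 1))"

definition B_hom :: "(bool \<Rightarrow> 'a::comm_semiring_1) \<Rightarrow> bool" where
  "B_hom f \<longleftrightarrow> f False = 0 \<and> f True = 1 \<and>
     (\<forall>x y. f (x \<or> y) = f x + f y) \<and> (\<forall>x y. f (x \<and> y) = f x * f y)"

definition B_extension :: "(bool \<Rightarrow> 'a::comm_semiring_1) \<Rightarrow> bool" where
  "B_extension f \<longleftrightarrow> B_hom f \<and> inj f"

text \<open>L is finitely generated as a B-semimodule, where B acts on L by
  b \<cdot> x = f b * x.\<close>
definition B_finite :: "(bool \<Rightarrow> 'a::comm_semiring_1) \<Rightarrow> bool" where
  "B_finite f \<longleftrightarrow> (\<exists>S::'a set. finite S \<and>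
     (\<forall>x. \<exists>c::'a \<Rightarrow> bool. x = (\<Sum>s\<in>S. f (c s) * s)))"

end

theory Submission
  imports Defs
begin

theorem mainTheorem10:
  fixes f :: "bool \<Rightarrow> 'a::comm_semiring_1"
  assumes "is_semifield TYPE('a)"
    and "B_extension f"
    and "B_finite f"
  shows "surj f"
proof -
  have hom: "B_hom f" using assms(2) by (simp add: B_extension_def)
  have f0: "f False = 0" and f1: "f True = 1" using hom by (auto simp: B_hom_def)
  have idem1: "(1::'a) + 1 = 1"
  proof -
    have "f (True \<or> True) = f True + f True" using hom unfolding B_hom_def by blast
    thus ?thesis using f1 by simp
  qed
  have idem: "(a::'a) + a = a" for a
  proof -
    have "a + a = a * (1 + 1)" by (simp only: distrib_left mult_1_right)
    thus ?thesis using idem1 by simp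
  qed
  have zsf: "(a::'a) + b = 0 \<Longrightarrow> a = 0" for a b
  proof -
    assume h: "a + b = 0"
    have "a = a + (a + b)" using h by simp
    also have "\<dots> = (a + a) + b" by (simp add: add.assoc)
    also have "\<dots> = 0" using idem h by simp
    finally show ?thesis .
  qed
  obtain S :: "'a set" where S: "finite S" "\<And>x. \<exists>c. x = (\<Sum>s\<in>S. f (c s) * s)"
    using assms(3) unfolding B_finite_def by blast
  have cov: "UNIV \<subseteq> (\<lambda>T. sum id T) ` Pow S"
  proof
    fix x :: 'a
    obtain c where c: "x = (\<Sum>s\<in>S. f (c s) * s)" using S(2) by blast
    have "x = (\<Sum>s\<in>S. if c s then s else 0)"
      unfolding c by (rule sum.cong) (auto simp: f0 f1)
    also have "\<dots> = sum id {s\<in>S. c s}"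
      using S(1) by (simp add: sum.inter_filter)
    finally show "x \<in> (\<lambda>T. sum id T) ` Pow S" by blast
  qed
  have finU: "finite (UNIV::'a set)" by (rule finite_surj[OF _ cov]) (simp add: S(1))
  define z where "z = (\<Sum>l\<in>(UNIV::'a set). l)"
  have z0: "z \<noteq> 0"
  proof
    assume "z = 0"
    moreover have "z = 1 + (\<Sum>l\<in>UNIV - {1::'a}. l)"
      unfolding z_def by (rule sum.remove[OF finU]) simp
    ultimately have "(1::'a) = 0" using zsf by metis
    thus False by simp
  qed
  have one: "x = 1" if x: "x \<noteq> 0" for x :: 'a
  proof -
    obtain y where y: "x * y = 1" using assms(1) x unfolding is_semifield_def by blast
    have inj: "inj ((*) x)"
    proof (rule injI)
      fix a b assume "x * a = x * b"
      hence "y * (x * a) = y * (x * b)" by simp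
      moreover have "y * (x * c) = c" for c
      proof -
        have "y * (x * c) = (x * y) * c" by (simp add: ac_simps)
        thus ?thesis using y by simp
      qed
      ultimately show "a = b" by simp
    qed
    hence im: "(*) x ` UNIV = UNIV" using finU finite_UNIV_inj_surj by blast
    have "x * z = (\<Sum>l\<in>UNIV. x * l)" unfolding z_def by (simp add: sum_distrib_left)
    also have "\<dots> = (\<Sum>l\<in>(*) x ` UNIV. l)"
      using sum.reindex[OF inj, of "\<lambda>l. l"] by (simp add: comp_def)
    also have "\<dots> = z" using im z_def by simp
    finally have xz: "x * z = z" .
    obtain w where w: "z * w = 1" using assms(1) z0 unfolding is_semifield_def by blast
    have "x * z * w = z * w" using xz by simp
    thus ?thesis using w by (simp add: mult.assoc)
  qed
  show ?thesis
  proof (rule surjI[where f = "\<lambda>x. x \<noteq> 0"])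
    fix x :: 'a
    show "f (x \<noteq> 0) = x" using one[of x] f0 f1 by (cases "x = 0") auto
  qed
qed

end
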